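(* Let $B$ be a commutative ring with identity and $A$ a subring of $B$ containing the identity of $B$. Let $i^*:\operatorname{spec} B\to \operatorname{spec} A$ be the map $i^*(P)=P\cap A$. Then $A$ is a dense subring of $B$ if and only if $i^*$ is one-one and open, where "open" means: for every open set $U$ of $\operatorname{spec} B$, the set $i^*(U)$ is open in the subspace $i^*(\operatorname{spec} B)$ of $\operatorname{spec} A$.
   Context: All rings are commutative with identity; subrings contain the identity of the larger ring. $\operatorname{spec} R$ denotes the set of prime ideals of $R$ with the Zariski topology. A subring $A$ of a ring $B$ is called a dense subring of $B$ if for every ideal $I$ of $B$ and every $b\in B$ with $b\notin \operatorname{rad}(I)$, there exists $a\in B$ with $a\notin \operatorname{rad}(I)$ such that $ab\in A$. Here $\operatorname{rad}(I)$ is the radical of $I$ in $B$. *)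

theory Defs
  imports "HOL-Algebra.Algebra"
begin

definition spec :: "('a, 'b) ring_scheme \<Rightarrow> 'a set set" where
  "spec R = {P. primeideal P R}"

definition zariski_open :: "('a, 'b) ring_scheme \<Rightarrow> 'a set set \<Rightarrow> bool" where
  "zariski_open R U \<longleftrightarrow> (\<exists>S. S \<subseteq> carrier R \<and> U = {P \<in> spec R. \<not> S \<subseteq> P})"

definition rad :: "('a, 'b) ring_scheme \<Rightarrow> 'a set \<Rightarrow> 'a set" where
  "rad R I = {x \<in> carrier R. \<exists>n::nat. x [^]\<^bsub>R\<^esub> n \<in> I}"

definition dense_subring :: "'a set \<Rightarrow> ('a, 'b) ring_scheme \<Rightarrow> bool" where
  "dense_subring A B \<longleftrightarrow>
     (\<forall>I b. ideal I B \<longrightarrow> b \<in> carrier B \<longrightarrow> b \<notin> rad B I \<longrightarrow>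
        (\<exists>a \<in> carrier B. a \<notin> rad B I \<and> a \<otimes>\<^bsub>B\<^esub> b \<in> A))"

end

theory Submission
  imports Defs
begin

lemma prime_avoid:
  fixes R (structure)
  assumes R: "cring R" and J: "ideal J R" and x: "x \<in> carrier R"
    and nx: "\<forall>n::nat. x [^]\<^bsub>R\<^esub> n \<notin> J"
  shows "\<exists>P. primeideal P R \<and> J \<subseteq> P \<and> x \<notin> P"
proof -
  interpret cring R by fact
  define F where "F = {K. ideal K R \<and> J \<subseteq> K \<and> (\<forall>n::nat. x [^] n \<notin> K)}"
  have "\<exists>M\<in>F. \<forall>K\<in>F. M \<subseteq> K \<longrightarrow> K = M"
  proof (rule subset_Zorn_nonempty)
    show "F \<noteq> {}" using J nx F_def by auto
    fix C assume C: "C \<noteq> {}" "subset.chain F C"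
    then have ch: "subset.chain {I. ideal I R} C" unfolding pred_on.chain_def F_def by auto
    have "ideal (\<Union>C) R" using chain_Union_is_ideal[OF ch] C(1) by simp
    moreover have "J \<subseteq> \<Union>C" using C unfolding pred_on.chain_def F_def by blast
    moreover have "\<forall>n::nat. x [^] n \<notin> \<Union>C" using C unfolding pred_on.chain_def F_def by auto
    ultimately show "\<Union>C \<in> F" unfolding F_def by auto
  qed
  then obtain M where M: "M \<in> F" and mx: "\<And>K. K \<in> F \<Longrightarrow> M \<subseteq> K \<Longrightarrow> K = M" by blast
  have Mi: "ideal M R" "J \<subseteq> M" "\<And>n::nat. x[^]n \<notin> M" using M F_def by auto
  have key: "\<exists>n m r. m \<in> M \<and> r \<in> carrier R \<and> x[^](n::nat) = m \<oplus> r \<otimes> a"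
    if a: "a \<in> carrier R" "a \<notin> M" for a
  proof (rule ccontr)
    assume nn: "\<not> ?thesis"
    let ?K = "M <+>\<^bsub>R\<^esub> PIdl a"
    have Kmem: "?K = {y. \<exists>m r. m \<in> M \<and> r \<in> carrier R \<and> y = m \<oplus> r \<otimes> a}"
      unfolding set_add_def' cgenideal_def by blast
    have "ideal ?K R" using add_ideals[OF Mi(1) cgenideal_ideal[OF a(1)]] .
    moreover have "M \<subseteq> ?K"
    proof
      fix m assume "m \<in> M"
      then have mc: "m \<in> carrier R" by (rule ideal.Icarr[OF Mi(1)])
      then have "m = m \<oplus> \<zero> \<otimes> a" using a by simp
      then show "m \<in> ?K" unfolding Kmem using \<open>m \<in> M\<close> zero_closed by blast
    qed
    moreover have "\<forall>n::nat. x [^] n \<notin> ?K" using nn unfolding Kmem by blast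
    ultimately have "?K \<in> F" using Mi unfolding F_def by auto
    then have "?K = M" using mx \<open>M \<subseteq> ?K\<close> by blast
    moreover have "a \<in> ?K"
    proof -
      have "\<zero> \<in> M" using Mi(1) additive_subgroup.zero_closed ideal.axioms(1) by blast
      moreover have "a = \<zero> \<oplus> \<one> \<otimes> a" using a by simp
      ultimately show ?thesis unfolding Kmem using one_closed by blast
    qed
    ultimately show False using a by blast
  qed
  have "primeideal M R"
  proof (rule primeidealI[OF Mi(1) R])
    show "carrier R \<noteq> M" using Mi(3)[of 0] by auto
    fix a b assume ab: "a \<in> carrier R" "b \<in> carrier R" "a \<otimes> b \<in> M"
    show "a \<in> M \<or> b \<in> M"
    proof (rule ccontr)
      assume "\<not> ?thesis"
      then obtain n m1 r k m2 s where
        1: "m1 \<in> M" "r \<in> carrier R" "x[^](n::nat) = m1 \<oplus> r \<otimes> a" and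
        2: "m2 \<in> M" "s \<in> carrier R" "x[^](k::nat) = m2 \<oplus> s \<otimes> b"
        using key[of a] key[of b] ab \<open>\<not> (a \<in> M \<or> b \<in> M)\<close> by blast
      have c: "m1 \<in> carrier R" "m2 \<in> carrier R" using ideal.Icarr[OF Mi(1) 1(1)] ideal.Icarr[OF Mi(1) 2(1)] by auto
      have "x[^](n+k) = x[^]n \<otimes> x[^]k" using x nat_pow_mult by simp
      also have "\<dots> = m1 \<otimes> (m2 \<oplus> s \<otimes> b) \<oplus> ((r \<otimes> a) \<otimes> m2 \<oplus> (r \<otimes> s) \<otimes> (a \<otimes> b))"
      proof -
        have "(r \<otimes> a) \<otimes> (s \<otimes> b) = (r \<otimes> s) \<otimes> (a \<otimes> b)"
          using 1 2 ab by (simp add: m_ac)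
        then show ?thesis using 1 2 c ab by (simp add: l_distr r_distr a_ac)
      qed
      also have "\<dots> \<in> M"
      proof -
        have i1: "m1 \<otimes> (m2 \<oplus> s \<otimes> b) \<in> M" using 1 2 ab c Mi(1) by (simp add: ideal.I_r_closed)
        have i2: "(r \<otimes> a) \<otimes> m2 \<in> M" using 1 2 ab c Mi(1) by (simp add: ideal.I_l_closed)
        have i3: "(r \<otimes> s) \<otimes> (a \<otimes> b) \<in> M" using 1 2 ab c Mi(1) by (simp add: ideal.I_l_closed)
        show ?thesis using i1 i2 i3 Mi(1) additive_subgroup.a_closed ideal.axioms(1) by metis
      qed
      finally show False using Mi(3) by blast
    qed
  qed
  moreover have "x \<notin> M" using Mi(3)[of 1] x by simp
  ultimately show ?thesis using Mi by blast
qed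

lemma prime_pow:
  fixes R (structure)
  assumes "primeideal P R" "x \<in> carrier R" "x [^]\<^bsub>R\<^esub> (n::nat) \<in> P"
  shows "x \<in> P"
  using assms(3)
proof (induction n)
  case 0
  then show ?case using assms(1) primeideal.I_notcarr ideal.one_imp_carrier
    by (metis primeideal.axioms(1) Group.nat_pow_0)
next
  case (Suc n)
  interpret primeideal P R by fact
  have "x [^] n \<otimes> x \<in> P" using Suc by simp
  then show ?case using I_prime assms(2) Suc.IH by (meson nat_pow_closed)
qed

lemma prime_sub:
  assumes "cring B" "subring A B" "primeideal P B"
  shows "primeideal (P \<inter> A) (B\<lparr>carrier := A\<rparr>)"
proof -
  interpret cring B by fact
  have r: "ring (B\<lparr>carrier := A\<rparr>)" using subring_is_ring assms(2) by blast
  have cr: "cring (B\<lparr>carrier := A\<rparr>)"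
    using subcring_iff subcringI' assms(2) subringE(1) by blast
  have h: "ring_hom_ring (B\<lparr>carrier := A\<rparr>) B id"
    using r ring_axioms subringE(1)[OF assms(2)]
    by (intro ring_hom_ringI2) (auto simp: ring_hom_def)
  have "primeideal {r \<in> carrier (B\<lparr>carrier := A\<rparr>). id r \<in> P} (B\<lparr>carrier := A\<rparr>)"
    using ring_hom_ring.primeideal_vimage[OF h cr assms(3)] .
  moreover have "{r \<in> carrier (B\<lparr>carrier := A\<rparr>). id r \<in> P} = P \<inter> A" by auto
  ultimately show ?thesis by simp
qed

theorem theorem4p1:
  fixes B :: "('a, 'b) ring_scheme" and A :: "'a set"
  assumes "cring B" and "subring A B"
  shows "dense_subring A B \<longleftrightarrow>
     (inj_on (\<lambda>P. P \<inter> A) (spec B) \<and>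
      (\<forall>U. zariski_open B U \<longrightarrow>
         (\<exists>W. zariski_open (B\<lparr>carrier := A\<rparr>) W \<and>
              (\<lambda>P. P \<inter> A) ` U = W \<inter> (\<lambda>P. P \<inter> A) ` spec B)))"
proof -
  interpret B: cring B by fact
  let ?i = "\<lambda>P. P \<inter> A"
  let ?A = "B\<lparr>carrier := A\<rparr>"
  have Asub: "A \<subseteq> carrier B" using subringE(1)[OF assms(2)] .
  have spec_img: "P \<inter> A \<in> spec ?A" if "P \<in> spec B" for P
    using prime_sub[OF assms] that unfolding spec_def by auto
  have radP: "rad B P = P" if "P \<in> spec B" for P
  proof -
    have pP: "primeideal P B" using that spec_def by auto
    show ?thesis
    proof
      show "rad B P \<subseteq> P" unfolding rad_def using prime_pow[OF pP] by blast
      show "P \<subseteq> rad B P"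
      proof
        fix x assume x: "x \<in> P"
        then have xc: "x \<in> carrier B" using ideal.Icarr[OF primeideal.axioms(1)[OF pP]] by blast
        then have "x [^]\<^bsub>B\<^esub> (1::nat) \<in> P" using x by simp
        then show "x \<in> rad B P" unfolding rad_def using xc by blast
      qed
    qed
  qed
  have powA: "t [^]\<^bsub>B\<^esub> (n::nat) \<in> A" if "t \<in> A" for t n
  proof (induction n)
    case 0
    then show ?case using subringE(3)[OF assms(2)] by simp
  next
    case (Suc n)
    then show ?case using subringE(6)[OF assms(2)] that by simp
  qed
  show ?thesis
  proof
    assume D: "dense_subring A B"
    have incl: "P \<subseteq> Q" if P: "P \<in> spec B" "Q \<in> spec B" "P \<inter> A = Q \<inter> A" for P Q
    proof
      fix b assume b: "b \<in> P"
      show "b \<in> Q"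
      proof (rule ccontr)
        assume nb: "b \<notin> Q"
        have pP: "primeideal P B" "primeideal Q B" using P spec_def by auto
        have bc: "b \<in> carrier B" using ideal.Icarr[OF primeideal.axioms(1)[OF pP(1)] b] .
        have "b \<notin> rad B Q" using radP P(2) nb by simp
        then obtain a where a: "a \<in> carrier B" "a \<notin> rad B Q" "a \<otimes>\<^bsub>B\<^esub> b \<in> A"
          using D bc primeideal.axioms(1)[OF pP(2)] unfolding dense_subring_def by blast
        have "a \<otimes>\<^bsub>B\<^esub> b \<in> P" using ideal.I_l_closed[OF primeideal.axioms(1)[OF pP(1)] b a(1)] .
        hence "a \<otimes>\<^bsub>B\<^esub> b \<in> Q" using a(3) P(3) by blast
        hence "a \<in> Q \<or> b \<in> Q" using primeideal.I_prime[OF pP(2) a(1) bc] by blast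
        thus False using a(2) radP[OF P(2)] nb by auto
      qed
    qed
    have inj: "inj_on ?i (spec B)" unfolding inj_on_def
    proof (intro ballI impI)
      fix P Q assume "P \<in> spec B" "Q \<in> spec B" "P \<inter> A = Q \<inter> A"
      then show "P = Q" using incl[of P Q] incl[of Q P] by auto
    qed
    have opn: "\<forall>U. zariski_open B U \<longrightarrow>
         (\<exists>W. zariski_open ?A W \<and> ?i ` U = W \<inter> ?i ` spec B)"
    proof (intro allI impI)
      fix U assume "zariski_open B U"
      then obtain S where S: "S \<subseteq> carrier B" "U = {P \<in> spec B. \<not> S \<subseteq> P}"
        unfolding zariski_open_def by blast
      define T where "T = {x \<in> A. \<exists>s\<in>S. \<exists>c\<in>carrier B. x = c \<otimes>\<^bsub>B\<^esub> s}"
      define W where "W = {Q \<in> spec ?A. \<not> T \<subseteq> Q}"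
      have "zariski_open ?A W" unfolding zariski_open_def W_def
        by (rule exI[of _ T]) (auto simp: T_def)
      moreover have "?i ` U = W \<inter> ?i ` spec B"
      proof
        show "?i ` U \<subseteq> W \<inter> ?i ` spec B"
        proof
          fix Z assume "Z \<in> ?i ` U"
          then obtain P where P: "P \<in> spec B" "\<not> S \<subseteq> P" "Z = P \<inter> A" using S by auto
          then obtain s where s: "s \<in> S" "s \<notin> P" by auto
          have pP: "primeideal P B" using P spec_def by auto
          have sc: "s \<in> carrier B" using S(1) s(1) by blast
          have "s \<notin> rad B P" using radP[OF P(1)] s by simp
          then obtain a where a: "a \<in> carrier B" "a \<notin> rad B P" "a \<otimes>\<^bsub>B\<^esub> s \<in> A"
            using D sc primeideal.axioms(1)[OF pP] unfolding dense_subring_def by blast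
          have "a \<otimes>\<^bsub>B\<^esub> s \<in> T" unfolding T_def using a s by blast
          moreover have "a \<otimes>\<^bsub>B\<^esub> s \<notin> P"
          proof
            assume "a \<otimes>\<^bsub>B\<^esub> s \<in> P"
            then have "a \<in> P \<or> s \<in> P" using primeideal.I_prime[OF pP a(1) sc] by blast
            then show False using a(2) radP[OF P(1)] s(2) by auto
          qed
          ultimately have "\<not> T \<subseteq> Z" using P(3) by blast
          thus "Z \<in> W \<inter> ?i ` spec B" using W_def spec_img[OF P(1)] P(1,3) by auto
        qed
        show "W \<inter> ?i ` spec B \<subseteq> ?i ` U"
        proof
          fix Z assume Z: "Z \<in> W \<inter> ?i ` spec B"
          then obtain P where P: "P \<in> spec B" "Z = P \<inter> A" by auto
          have pP: "primeideal P B" using P spec_def by auto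
          have "\<not> T \<subseteq> P \<inter> A" using Z P W_def by auto
          then obtain t where t: "t \<in> T" "t \<notin> P" using T_def by auto
          then obtain s c where sc: "s \<in> S" "c \<in> carrier B" "t = c \<otimes>\<^bsub>B\<^esub> s"
            unfolding T_def by blast
          have "s \<notin> P"
          proof
            assume "s \<in> P"
            then have "c \<otimes>\<^bsub>B\<^esub> s \<in> P"
              using ideal.I_l_closed[OF primeideal.axioms(1)[OF pP] _ sc(2)] by blast
            then show False using t sc by simp
          qed
          then have "\<not> S \<subseteq> P" using sc(1) by blast
          thus "Z \<in> ?i ` U" using S P by auto
        qed
      qed
      ultimately show "\<exists>W. zariski_open ?A W \<and> ?i ` U = W \<inter> ?i ` spec B" by blast
    qed
    show "inj_on ?i (spec B) \<and> (\<forall>U. zariski_open B U \<longrightarrow>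
         (\<exists>W. zariski_open ?A W \<and> ?i ` U = W \<inter> ?i ` spec B))"
      using inj opn by blast
  next
    assume H: "inj_on ?i (spec B) \<and> (\<forall>U. zariski_open B U \<longrightarrow>
         (\<exists>W. zariski_open ?A W \<and> ?i ` U = W \<inter> ?i ` spec B))"
    show "dense_subring A B" unfolding dense_subring_def
    proof (intro allI impI)
      fix I b assume I: "ideal I B" and b: "b \<in> carrier B" "b \<notin> rad B I"
      have "\<forall>n::nat. b [^]\<^bsub>B\<^esub> n \<notin> I" using b unfolding rad_def by auto
      then obtain P where P: "primeideal P B" "I \<subseteq> P" "b \<notin> P"
        using prime_avoid[OF assms(1) I b(1)] by blast
      define U where "U = {P \<in> spec B. \<not> {b} \<subseteq> P}"
      have "zariski_open B U" unfolding zariski_open_def U_def using b(1) by blast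
      then obtain W where W: "zariski_open ?A W" "?i ` U = W \<inter> ?i ` spec B" using H by blast
      then obtain T where T: "T \<subseteq> A" "W = {Q \<in> spec ?A. \<not> T \<subseteq> Q}"
        unfolding zariski_open_def by auto
      have PU: "P \<in> U" using P U_def spec_def by auto
      hence "P \<inter> A \<in> W" using W(2) by blast
      then obtain t where t: "t \<in> T" "t \<notin> P" using T by auto
      have tA: "t \<in> A" using t T by auto
      have tc: "t \<in> carrier B" using tA Asub by auto
      have "\<exists>n c. c \<in> carrier B \<and> t [^]\<^bsub>B\<^esub> (n::nat) = c \<otimes>\<^bsub>B\<^esub> b"
      proof (rule ccontr)
        assume nn: "\<not> ?thesis"
        have "\<forall>n::nat. t [^]\<^bsub>B\<^esub> n \<notin> PIdl\<^bsub>B\<^esub> b" using nn unfolding cgenideal_def by auto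
        then obtain Q where Q: "primeideal Q B" "PIdl\<^bsub>B\<^esub> b \<subseteq> Q" "t \<notin> Q"
          using prime_avoid[OF assms(1) B.cgenideal_ideal[OF b(1)] tc] by blast
        have "b \<in> Q" using Q(2) B.cgenideal_self[OF b(1)] by blast
        hence QU: "Q \<notin> U" using U_def by auto
        have Qs: "Q \<in> spec B" using Q spec_def by auto
        have "Q \<inter> A \<in> W" using T Q t spec_img[OF Qs] by auto
        then have "Q \<inter> A \<in> ?i ` U" using W(2) Qs by blast
        then obtain Q' where Q': "Q' \<in> U" "Q \<inter> A = Q' \<inter> A" by auto
        have "Q' \<in> spec B" using Q'(1) U_def by auto
        then have "Q' = Q" using H Qs Q'(2) unfolding inj_on_def by metis
        thus False using QU Q'(1) by simp
      qed
      then obtain n c where c: "c \<in> carrier B" "t [^]\<^bsub>B\<^esub> (n::nat) = c \<otimes>\<^bsub>B\<^esub> b" by blast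
      have "c \<otimes>\<^bsub>B\<^esub> b \<in> A" using c(2) powA[OF tA] by metis
      moreover have "c \<notin> rad B I"
      proof
        assume "c \<in> rad B I"
        then obtain m where "c [^]\<^bsub>B\<^esub> (m::nat) \<in> I" unfolding rad_def by auto
        then have "c \<in> P" using prime_pow[OF P(1) c(1)] P(2) by blast
        then have "c \<otimes>\<^bsub>B\<^esub> b \<in> P"
          using ideal.I_r_closed[OF primeideal.axioms(1)[OF P(1)] _ b(1)] by blast
        then have "t \<in> P" using c(2) prime_pow[OF P(1) tc] by metis
        thus False using t by simp
      qed
      ultimately show "\<exists>a\<in>carrier B. a \<notin> rad B I \<and> a \<otimes>\<^bsub>B\<^esub> b \<in> A" using c(1) by blast
    qed
  qed
qed

end
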